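(* Let $(A,\cdot,[\,,\,],\varepsilon)$ be an $F$-manifold color algebra and let $\mathfrak B$ be a nondegenerate symmetric bilinear form on $A$ satisfying $\mathfrak B(x\cdot y,z)=\mathfrak B(x,y\cdot z)$ and $\mathfrak B([x,y],z)=\mathfrak B(x,[y,z])$ for all homogeneous $x,y,z\in A$. Then $(A,\cdot,[\,,\,],\varepsilon)$ is a coherence $F$-manifold color algebra, i.e. for all homogeneous $x,y,z,w\in A$: $$P_{x\cdot y}(z,w)=\varepsilon(x,y+z)P_y(z,x\cdot w)+\varepsilon(y,z)P_x(z,y\cdot w),$$ $$P_x(y,z)\cdot w=-\varepsilon(x,y+z)T(y,z)(x\cdot w)+x\cdot T(y,z)(w),$$ where $T(y,z)(w)=-\varepsilon(y,z)[z,y\cdot w]-[y,z\cdot w]+[y\cdot z,w]$.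
   Context: $G$ is an abelian group and $\varepsilon:G\times G\to\mathbb K\setminus\{0\}$ a skew-symmetric bicharacter: $\varepsilon(a,b)\varepsilon(b,a)=1$, $\varepsilon(a,b+c)=\varepsilon(a,b)\varepsilon(a,c)$, $\varepsilon(a+b,c)=\varepsilon(a,c)\varepsilon(b,c)$; $\mathbb K$ algebraically closed of characteristic zero, $A$ finite-dimensional and $G$-graded. For homogeneous $x\in A_a,y\in A_b$, $\varepsilon(x,y)$ means $\varepsilon(a,b)$, $\varepsilon(x,y+z)$ means $\varepsilon(a,b+c)$, etc. An $\varepsilon$-commutative associative algebra is a $G$-graded associative algebra $(A,\cdot)$ with $A_aA_b\subseteq A_{a+b}$ and $x\cdot y=\varepsilon(x,y)y\cdot x$. A Lie color algebra is a $G$-graded space with bilinear $[\,,\,]$, $[A_a,A_b]\subseteq A_{a+b}$, $[x,y]=-\varepsilon(x,y)[y,x]$, $\varepsilon(z,x)[x,[y,z]]+\varepsilon(y,z)[z,[x,y]]+\varepsilon(x,y)[y,[z,x]]=0$. An $F$-manifold color algebra is $(A,\cdot,[\,,\,],\varepsilon)$ with $(A,\cdot,\varepsilon)$ an $\varepsilon$-commutative associative algebra and $(A,[\,,\,],\varepsilon)$ a Lie color algebra such that $P_{x\cdot y}(z,w)=x\cdot P_y(z,w)+\varepsilon(x,y)y\cdot P_x(z,w)$ for all homogeneous $x,y,z,w$, where $P_x(y,z)=[x,y\cdot z]-[x,y]\cdot z-\varepsilon(x,y)y\cdot[x,z]$. A coherence $F$-manifold color algebra is an $F$-manifold color algebra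 satisfying the two identities in the claim. *)

theory Defs
  imports "HOL-Computational_Algebra.Polynomial"
begin

text \<open>The ground field 'k is algebraically closed (characteristic zero is imposed
  by the type class field_char_0 in the theorem).\<close>
definition alg_closed_field :: "'k::field itself \<Rightarrow> bool" where
  "alg_closed_field _ \<longleftrightarrow> (\<forall>p :: 'k poly. degree p \<noteq> 0 \<longrightarrow> (\<exists>x. poly p x = 0))"

definition skew_bicharacter :: "('g::ab_group_add \<Rightarrow> 'g \<Rightarrow> 'k::field) \<Rightarrow> bool" where
  "skew_bicharacter eps \<longleftrightarrow>
     (\<forall>a b. eps a b \<noteq> 0) \<and>
     (\<forall>a b. eps a b * eps b a = 1) \<and>
     (\<forall>a b c. eps a (b + c) = eps a b * eps a c) \<and>
     (\<forall>a b c. eps (a + b) c = eps a c * eps b c)"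

definition fd_graded_space ::
  "('k::field \<Rightarrow> 'v::ab_group_add \<Rightarrow> 'v) \<Rightarrow> ('g::ab_group_add \<Rightarrow> 'v set) \<Rightarrow> bool" where
  "fd_graded_space scale Ag \<longleftrightarrow>
     vector_space scale \<and>
     (\<exists>B. finite B \<and> module.span scale B = UNIV) \<and>
     (\<forall>a. module.subspace scale (Ag a)) \<and>
     (\<forall>x. \<exists>!f. (\<forall>a. f a \<in> Ag a) \<and> finite {a. f a \<noteq> 0} \<and> x = (\<Sum>a\<in>{a. f a \<noteq> 0}. f a))"

definition bilinear_op :: "('k::field \<Rightarrow> 'v::ab_group_add \<Rightarrow> 'v) \<Rightarrow> ('v \<Rightarrow> 'v \<Rightarrow> 'v) \<Rightarrow> bool" where
  "bilinear_op scale m \<longleftrightarrow>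
     (\<forall>x. Vector_Spaces.linear scale scale (m x)) \<and>
     (\<forall>y. Vector_Spaces.linear scale scale (\<lambda>x. m x y))"

definition graded_op :: "('g::ab_group_add \<Rightarrow> 'v set) \<Rightarrow> ('v \<Rightarrow> 'v \<Rightarrow> 'v) \<Rightarrow> bool" where
  "graded_op Ag m \<longleftrightarrow> (\<forall>a b x y. x \<in> Ag a \<longrightarrow> y \<in> Ag b \<longrightarrow> m x y \<in> Ag (a + b))"

definition eps_comm_assoc ::
  "('k::field \<Rightarrow> 'v::ab_group_add \<Rightarrow> 'v) \<Rightarrow> ('g::ab_group_add \<Rightarrow> 'v set) \<Rightarrow> ('g \<Rightarrow> 'g \<Rightarrow> 'k)
    \<Rightarrow> ('v \<Rightarrow> 'v \<Rightarrow> 'v) \<Rightarrow> bool" where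
  "eps_comm_assoc scale Ag eps mul \<longleftrightarrow>
     bilinear_op scale mul \<and> graded_op Ag mul \<and>
     (\<forall>x y z. mul (mul x y) z = mul x (mul y z)) \<and>
     (\<forall>a b x y. x \<in> Ag a \<longrightarrow> y \<in> Ag b \<longrightarrow> mul x y = scale (eps a b) (mul y x))"

definition lie_color ::
  "('k::field \<Rightarrow> 'v::ab_group_add \<Rightarrow> 'v) \<Rightarrow> ('g::ab_group_add \<Rightarrow> 'v set) \<Rightarrow> ('g \<Rightarrow> 'g \<Rightarrow> 'k)
    \<Rightarrow> ('v \<Rightarrow> 'v \<Rightarrow> 'v) \<Rightarrow> bool" where
  "lie_color scale Ag eps br \<longleftrightarrow>
     bilinear_op scale br \<and> graded_op Ag br \<and>
     (\<forall>a b x y. x \<in> Ag a \<longrightarrow> y \<in> Ag b \<longrightarrow> br x y = - scale (eps a b) (br y x)) \<and>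
     (\<forall>a b c x y z. x \<in> Ag a \<longrightarrow> y \<in> Ag b \<longrightarrow> z \<in> Ag c \<longrightarrow>
        scale (eps c a) (br x (br y z)) + scale (eps b c) (br z (br x y))
        + scale (eps a b) (br y (br z x)) = 0)"

definition Pfun ::
  "('k \<Rightarrow> 'v::ab_group_add \<Rightarrow> 'v) \<Rightarrow> ('g \<Rightarrow> 'g \<Rightarrow> 'k) \<Rightarrow> ('v \<Rightarrow> 'v \<Rightarrow> 'v) \<Rightarrow> ('v \<Rightarrow> 'v \<Rightarrow> 'v)
    \<Rightarrow> 'g \<Rightarrow> 'g \<Rightarrow> 'v \<Rightarrow> 'v \<Rightarrow> 'v \<Rightarrow> 'v" where
  "Pfun scale eps mul br a b x y z =
     br x (mul y z) - mul (br x y) z - scale (eps a b) (mul y (br x z))"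

definition Tfun ::
  "('k \<Rightarrow> 'v::ab_group_add \<Rightarrow> 'v) \<Rightarrow> ('g \<Rightarrow> 'g \<Rightarrow> 'k) \<Rightarrow> ('v \<Rightarrow> 'v \<Rightarrow> 'v) \<Rightarrow> ('v \<Rightarrow> 'v \<Rightarrow> 'v)
    \<Rightarrow> 'g \<Rightarrow> 'g \<Rightarrow> 'v \<Rightarrow> 'v \<Rightarrow> 'v \<Rightarrow> 'v" where
  "Tfun scale eps mul br b c y z w =
     - scale (eps b c) (br z (mul y w)) - br y (mul z w) + br (mul y z) w"

definition F_manifold_color ::
  "('k::field \<Rightarrow> 'v::ab_group_add \<Rightarrow> 'v) \<Rightarrow> ('g::ab_group_add \<Rightarrow> 'v set) \<Rightarrow> ('g \<Rightarrow> 'g \<Rightarrow> 'k)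
    \<Rightarrow> ('v \<Rightarrow> 'v \<Rightarrow> 'v) \<Rightarrow> ('v \<Rightarrow> 'v \<Rightarrow> 'v) \<Rightarrow> bool" where
  "F_manifold_color scale Ag eps mul br \<longleftrightarrow>
     eps_comm_assoc scale Ag eps mul \<and> lie_color scale Ag eps br \<and>
     (\<forall>a b c d x y z w. x \<in> Ag a \<longrightarrow> y \<in> Ag b \<longrightarrow> z \<in> Ag c \<longrightarrow> w \<in> Ag d \<longrightarrow>
        Pfun scale eps mul br (a + b) c (mul x y) z w
        = mul x (Pfun scale eps mul br b c y z w)
          + scale (eps a b) (mul y (Pfun scale eps mul br a c x z w)))"

definition coherence_F_manifold_color ::
  "('k::field \<Rightarrow> 'v::ab_group_add \<Rightarrow> 'v) \<Rightarrow> ('g::ab_group_add \<Rightarrow> 'v set) \<Rightarrow> ('g \<Rightarrow> 'g \<Rightarrow> 'k)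
    \<Rightarrow> ('v \<Rightarrow> 'v \<Rightarrow> 'v) \<Rightarrow> ('v \<Rightarrow> 'v \<Rightarrow> 'v) \<Rightarrow> bool" where
  "coherence_F_manifold_color scale Ag eps mul br \<longleftrightarrow>
     F_manifold_color scale Ag eps mul br \<and>
     (\<forall>a b c d x y z w. x \<in> Ag a \<longrightarrow> y \<in> Ag b \<longrightarrow> z \<in> Ag c \<longrightarrow> w \<in> Ag d \<longrightarrow>
        Pfun scale eps mul br (a + b) c (mul x y) z w
        = scale (eps a (b + c)) (Pfun scale eps mul br b c y z (mul x w))
          + scale (eps b c) (Pfun scale eps mul br a c x z (mul y w))) \<and>
     (\<forall>a b c d x y z w. x \<in> Ag a \<longrightarrow> y \<in> Ag b \<longrightarrow> z \<in> Ag c \<longrightarrow> w \<in> Ag d \<longrightarrow>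
        mul (Pfun scale eps mul br a b x y z) w
        = - scale (eps a (b + c)) (Tfun scale eps mul br b c y z (mul x w))
          + mul x (Tfun scale eps mul br b c y z w))"

end

theory Submission
  imports Defs
begin

locale fmc = vector_space scale
  for scale :: "'k::field \<Rightarrow> 'v::ab_group_add \<Rightarrow> 'v" +
  fixes Ag :: "'g::ab_group_add \<Rightarrow> 'v set" and eps :: "'g \<Rightarrow> 'g \<Rightarrow> 'k"
    and mul br :: "'v \<Rightarrow> 'v \<Rightarrow> 'v" and Bf :: "'v \<Rightarrow> 'v \<Rightarrow> 'k"
  assumes sub: "subspace (Ag a)"
  and dec: "\<And>x. \<exists>f. (\<forall>a. f a \<in> Ag a) \<and> finite {a. f a \<noteq> 0} \<and> x = (\<Sum>a\<in>{a. f a \<noteq> 0}. f a)"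
  and einv: "eps p q * eps q p = 1"
  and eR: "eps p (q + r) = eps p q * eps p r"
  and eL: "eps (p + q) r = eps p r * eps q r"
  and mulR: "Vector_Spaces.linear scale scale (mul x)"
  and mulL: "Vector_Spaces.linear scale scale (\<lambda>x. mul x y)"
  and brR: "Vector_Spaces.linear scale scale (br x)"
  and brL: "Vector_Spaces.linear scale scale (\<lambda>x. br x y)"
  and BR: "Vector_Spaces.linear scale (*) (Bf x)"
  and BL: "Vector_Spaces.linear scale (*) (\<lambda>x. Bf x y)"
  and mul_gr: "x \<in> Ag a \<Longrightarrow> y \<in> Ag b \<Longrightarrow> mul x y \<in> Ag (a + b)"
  and br_gr: "x \<in> Ag a \<Longrightarrow> y \<in> Ag b \<Longrightarrow> br x y \<in> Ag (a + b)"
  and assoc: "mul (mul x y) z = mul x (mul y z)"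
  and mcomm: "x \<in> Ag a \<Longrightarrow> y \<in> Ag b \<Longrightarrow> mul x y = scale (eps a b) (mul y x)"
  and bskew: "x \<in> Ag a \<Longrightarrow> y \<in> Ag b \<Longrightarrow> br x y = - scale (eps a b) (br y x)"
  and fman: "x \<in> Ag a \<Longrightarrow> y \<in> Ag b \<Longrightarrow> z \<in> Ag c \<Longrightarrow> w \<in> Ag d \<Longrightarrow>
        Pfun scale eps mul br (a + b) c (mul x y) z w
        = mul x (Pfun scale eps mul br b c y z w)
          + scale (eps a b) (mul y (Pfun scale eps mul br a c x z w))"
  and Bsym: "Bf x y = Bf y x"
  and nondeg: "(\<And>y. Bf x y = 0) \<Longrightarrow> x = 0"
  and Bm: "x \<in> Ag a \<Longrightarrow> y \<in> Ag b \<Longrightarrow> z \<in> Ag c \<Longrightarrow> Bf (mul x y) z = Bf x (mul y z)"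
  and Bb: "x \<in> Ag a \<Longrightarrow> y \<in> Ag b \<Longrightarrow> z \<in> Ag c \<Longrightarrow> Bf (br x y) z = Bf x (br y z)"
begin

abbreviation "P \<equiv> Pfun scale eps mul br"
abbreviation "T \<equiv> Tfun scale eps mul br"

lemma hR: "module_hom scale scale (mul x)" using mulR linear_iff_module_hom by blast
lemma hL: "module_hom scale scale (\<lambda>x. mul x y)" using mulL linear_iff_module_hom by blast
lemma gR: "module_hom scale scale (br x)" using brR linear_iff_module_hom by blast
lemma gL: "module_hom scale scale (\<lambda>x. br x y)" using brL linear_iff_module_hom by blast
lemma kR: "module_hom scale (*) (Bf x)" using BR linear_iff_module_hom by blast
lemma kL: "module_hom scale (*) (\<lambda>x. Bf x y)" using BL linear_iff_module_hom by blast

lemmas lin_simps =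
  module_hom.add[OF hR] module_hom.diff[OF hR] module_hom.neg[OF hR] module_hom.scale[OF hR]
  module_hom.add[OF hL, simplified] module_hom.diff[OF hL, simplified] module_hom.neg[OF hL, simplified] module_hom.scale[OF hL, simplified]
  module_hom.add[OF gR] module_hom.diff[OF gR] module_hom.neg[OF gR] module_hom.scale[OF gR]
  module_hom.add[OF gL, simplified] module_hom.diff[OF gL, simplified] module_hom.neg[OF gL, simplified] module_hom.scale[OF gL, simplified]
  module_hom.add[OF kR] module_hom.diff[OF kR] module_hom.neg[OF kR] module_hom.scale[OF kR]
  module_hom.add[OF kL, simplified] module_hom.diff[OF kL, simplified] module_hom.neg[OF kL, simplified] module_hom.scale[OF kL, simplified]


lemma mem_add: "x \<in> Ag a \<Longrightarrow> y \<in> Ag a \<Longrightarrow> x + y \<in> Ag a" using sub subspace_add by blast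
lemma mem_diff: "x \<in> Ag a \<Longrightarrow> y \<in> Ag a \<Longrightarrow> x - y \<in> Ag a" using sub subspace_diff by blast
lemma mem_neg: "x \<in> Ag a \<Longrightarrow> - x \<in> Ag a" using sub subspace_neg by blast
lemma mem_scale: "x \<in> Ag a \<Longrightarrow> scale k x \<in> Ag a" using sub subspace_scale by blast
lemma mem_eq: "x \<in> Ag a \<Longrightarrow> a = b \<Longrightarrow> x \<in> Ag b" by simp

lemma mul_gr': "x \<in> Ag a \<Longrightarrow> y \<in> Ag b \<Longrightarrow> a + b = c \<Longrightarrow> mul x y \<in> Ag c" using mul_gr by blast
lemma br_gr': "x \<in> Ag a \<Longrightarrow> y \<in> Ag b \<Longrightarrow> a + b = c \<Longrightarrow> br x y \<in> Ag c" using br_gr by blast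

lemma P_gr: "x \<in> Ag a \<Longrightarrow> y \<in> Ag b \<Longrightarrow> z \<in> Ag c \<Longrightarrow> a + b + c = s \<Longrightarrow> P a b x y z \<in> Ag s"
  unfolding Pfun_def
  by (intro mem_diff mem_scale mul_gr' br_gr') (assumption | simp add: add_ac)+

lemma T_gr: "y \<in> Ag b \<Longrightarrow> z \<in> Ag c \<Longrightarrow> w \<in> Ag d \<Longrightarrow> b + c + d = s \<Longrightarrow> T b c y z w \<in> Ag s"
  unfolding Tfun_def
  by (intro mem_add mem_diff mem_neg mem_scale mul_gr' br_gr') (assumption | simp add: add_ac)+


lemma F1:
  assumes x: "x \<in> Ag a" and y: "y \<in> Ag b" and z: "z \<in> Ag c" and w: "w \<in> Ag d"
  shows "Bf (P a b x y z) w = eps a b * Bf y (P a c x z w)"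
proof -
  have yz: "mul y z \<in> Ag (b + c)" using y z mul_gr by blast
  have xw: "br x w \<in> Ag (a + d)" using x w br_gr by blast
  have xy: "br x y \<in> Ag (a + b)" using x y br_gr by blast
  have zw: "mul z w \<in> Ag (c + d)" using z w mul_gr by blast
  have xz: "br x z \<in> Ag (a + c)" using x z br_gr by blast
  have t1: "Bf (br x (mul y z)) w = - (eps a (b + c) * Bf y (mul z (br x w)))"
  proof -
    have "Bf (br x (mul y z)) w = - (eps a (b + c) * Bf (br (mul y z) x) w)"
      using bskew[OF x yz] by (simp add: lin_simps)
    also have "Bf (br (mul y z) x) w = Bf (mul y z) (br x w)" using Bb[OF yz x w] .
    also have "\<dots> = Bf y (mul z (br x w))" using Bm[OF y z xw] .
    finally show ?thesis .
  qed
  have t2: "Bf (mul (br x y) z) w = - (eps a b * Bf y (br x (mul z w)))"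
  proof -
    have "Bf (mul (br x y) z) w = Bf (br x y) (mul z w)" using Bm[OF xy z w] .
    also have "\<dots> = - (eps a b * Bf (br y x) (mul z w))" using bskew[OF x y] by (simp add: lin_simps)
    also have "Bf (br y x) (mul z w) = Bf y (br x (mul z w))" using Bb[OF y x zw] .
    finally show ?thesis .
  qed
  have t3: "Bf (mul y (br x z)) w = Bf y (mul (br x z) w)" using Bm[OF y xz w] .
  show ?thesis
    unfolding Pfun_def using t1 t2 t3 by (simp add: lin_simps eR algebra_simps)
qed

lemma F3:
  assumes x: "x \<in> Ag a" and y: "y \<in> Ag b" and z: "z \<in> Ag c"
  shows "P a b x y z = scale (eps b c) (P a c x z y)"
proof -
  have xz: "br x z \<in> Ag (a + c)" using x z br_gr by blast
  have xy: "br x y \<in> Ag (a + b)" using x y br_gr by blast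
  have 1: "mul z y = scale (eps c b) (mul y z)" using mcomm[OF z y] .
  have 2: "mul (br x z) y = scale (eps (a + c) b) (mul y (br x z))" using mcomm[OF xz y] .
  have 3: "mul z (br x y) = scale (eps c (a + b)) (mul (br x y) z)" using mcomm[OF z xy] .
  have e1: "eps b c * eps c b = 1" by (rule einv)
  have e2: "eps b c * eps (a + c) b = eps a b"
    using einv[of b c] einv[of c b] by (simp add: eL algebra_simps)
  have e3: "eps b c * eps a c * eps c (a + b) = 1"
    using einv[of c a] einv[of c b] by (simp add: eR) algebra
  show ?thesis unfolding Pfun_def 1 2 3
    by (simp add: lin_simps scale_right_diff_distrib e1 e2 e3 mult.assoc[symmetric])
qed

lemma F2:
  assumes x: "x \<in> Ag a" and y: "y \<in> Ag b" and z: "z \<in> Ag c" and v: "v \<in> Ag d"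
  shows "Bf (P a b x y z) v = Bf x (T b c y z v)"
proof -
  have yz: "mul y z \<in> Ag (b + c)" using y z mul_gr by blast
  have xy: "br x y \<in> Ag (a + b)" using x y br_gr by blast
  have zv: "mul z v \<in> Ag (c + d)" using z v mul_gr by blast
  have yv: "mul y v \<in> Ag (b + d)" using y v mul_gr by blast
  have xz: "br x z \<in> Ag (a + c)" using x z br_gr by blast
  have s1: "Bf (br x (mul y z)) v = Bf x (br (mul y z) v)" using Bb[OF x yz v] .
  have s2: "Bf (mul (br x y) z) v = Bf x (br y (mul z v))"
    using Bm[OF xy z v] Bb[OF x y zv] by simp
  have s3: "Bf (mul y (br x z)) v = eps b (a + c) * Bf x (br z (mul y v))"
    using mcomm[OF y xz] Bm[OF xz y v] Bb[OF x z yv] by (simp add: lin_simps)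
  have e: "eps a b * eps b (a + c) = eps b c"
    using einv[of a b] by (simp add: eR)
  show ?thesis unfolding Pfun_def Tfun_def
    by (simp add: lin_simps s1 s2 s3 mult.assoc[symmetric] e)
qed

lemma SYM:
  assumes p: "p \<in> Ag s" and z: "z \<in> Ag c" and w: "w \<in> Ag d" and u: "u \<in> Ag g"
  shows "Bf (P s c p z w) u = eps d g * Bf (P s c p z u) w"
  using F1[OF p z w u] F1[OF p z u w] F3[OF p w u] by (simp add: lin_simps)

lemma Km:
  assumes x: "x \<in> Ag a" and y: "y \<in> Ag b" and z: "z \<in> Ag c"
  shows "Bf (mul x y) z = eps a (b + c) * Bf (mul x y) z"
proof -
  have xz: "mul x z \<in> Ag (a + c)" using x z mul_gr by blast
  have xy: "mul x y \<in> Ag (a + b)" using x y mul_gr by blast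
  have "Bf (mul x y) z = eps a b * Bf (mul y x) z" using mcomm[OF x y] by (simp add: lin_simps)
  also have "Bf (mul y x) z = Bf (mul x z) y" using Bm[OF y x z] Bsym by simp
  also have "\<dots> = eps a c * Bf (mul z x) y" using mcomm[OF x z] by (simp add: lin_simps)
  also have "Bf (mul z x) y = Bf (mul x y) z" using Bm[OF z x y] Bsym by simp
  finally show ?thesis by (simp add: eR mult.assoc)
qed

lemma Kb:
  assumes x: "x \<in> Ag a" and y: "y \<in> Ag b" and z: "z \<in> Ag c"
  shows "Bf (br x y) z = eps a (b + c) * Bf (br x y) z"
proof -
  have "Bf (br x y) z = - (eps a b * Bf (br y x) z)" using bskew[OF x y] by (simp add: lin_simps)
  also have "Bf (br y x) z = Bf (br x z) y" using Bb[OF y x z] Bsym by simp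
  also have "\<dots> = - (eps a c * Bf (br z x) y)" using bskew[OF x z] by (simp add: lin_simps)
  also have "Bf (br z x) y = Bf (br x y) z" using Bb[OF z x y] Bsym by simp
  finally show ?thesis by (simp add: eR mult.assoc)
qed

lemma KT:
  assumes x: "x \<in> Ag a" and y: "y \<in> Ag b" and z: "z \<in> Ag c" and v: "v \<in> Ag d"
  shows "Bf x (T b c y z v) = eps a (b + c + d) * Bf x (T b c y z v)"
proof -
  have yz: "mul y z \<in> Ag (b + c)" using y z mul_gr by blast
  have zv: "mul z v \<in> Ag (c + d)" using z v mul_gr by blast
  have yv: "mul y v \<in> Ag (b + d)" using y v mul_gr by blast
  have k1: "Bf x (br z (mul y v)) = eps a (c + (b + d)) * Bf x (br z (mul y v))"
    using Kb[OF x z yv] Bb[OF x z yv] by simp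
  have k2: "Bf x (br y (mul z v)) = eps a (b + (c + d)) * Bf x (br y (mul z v))"
    using Kb[OF x y zv] Bb[OF x y zv] by simp
  have k3: "Bf x (br (mul y z) v) = eps a (b + c + d) * Bf x (br (mul y z) v)"
    using Kb[OF x yz v] Bb[OF x yz v] by simp
  show ?thesis unfolding Tfun_def using k1 k2 k3
    by (simp add: lin_simps eR) algebra
qed

lemma nondeg_hom:
  assumes h: "\<And>g u. u \<in> Ag g \<Longrightarrow> Bf X u = 0"
  shows "X = 0"
proof (rule nondeg)
  fix y
  obtain f where f: "\<forall>a. f a \<in> Ag a" "y = (\<Sum>a\<in>{a. f a \<noteq> 0}. f a)" using dec by blast
  have "Bf X y = (\<Sum>a\<in>{a. f a \<noteq> 0}. Bf X (f a))"
    unfolding f(2) by (rule module_hom.sum[OF kR])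
  also have "\<dots> = 0" using h f(1) by (intro sum.neutral) blast
  finally show "Bf X y = 0" .
qed

lemma ID2:
  assumes x: "x \<in> Ag a" and y: "y \<in> Ag b" and z: "z \<in> Ag c" and w: "w \<in> Ag d"
  shows "mul (P a b x y z) w = - scale (eps a (b + c)) (T b c y z (mul x w)) + mul x (T b c y z w)"
proof -
  have Pxyz: "P a b x y z \<in> Ag (a + b + c)" using P_gr[OF x y z] by simp
  have xw: "mul x w \<in> Ag (a + d)" using x w mul_gr by blast
  have t: "T b c y z w \<in> Ag (b + c + d)" using T_gr[OF y z w] by simp
  show ?thesis
  proof (subst eq_iff_diff_eq_0, rule nondeg_hom)
    fix g u assume u: "u \<in> Ag g"
    have wu: "mul w u \<in> Ag (d + g)" using w u mul_gr by blast
    have xu: "mul x u \<in> Ag (a + g)" using x u mul_gr by blast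
    have Puyz: "P g b u y z \<in> Ag (g + b + c)" using P_gr[OF u y z] by simp
    define L where "L = Bf x (T b c y z (mul w u))"
    define M where "M = Bf (P g b u y z) (mul x w)"
    have hL: "Bf (mul (P a b x y z) w) u = L"
      unfolding L_def using Bm[OF Pxyz w u] F2[OF x y z wu] by simp
    have hA: "Bf (T b c y z (mul x w)) u = M"
      unfolding M_def using F2[OF u y z xw] Bsym by metis
    have hB1: "Bf (mul x (T b c y z w)) u = eps a (b + c + d) * Bf (P (a + g) b (mul x u) y z) w"
    proof -
      have "Bf (mul x (T b c y z w)) u = eps a (b + c + d) * Bf (mul (T b c y z w) x) u"
        using mcomm[OF x t] by (simp add: lin_simps)
      also have "Bf (mul (T b c y z w) x) u = Bf (mul x u) (T b c y z w)"
        using Bm[OF t x u] Bsym by metis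
      also have "\<dots> = Bf (P (a + g) b (mul x u) y z) w" using F2[OF xu y z w] by simp
      finally show ?thesis .
    qed
    have hB2: "Bf (P (a + g) b (mul x u) y z) w = eps a (g + b + c) * M + eps a g * L"
    proof -
      have "Bf (P (a + g) b (mul x u) y z) w
          = Bf (mul x (P g b u y z)) w + eps a g * Bf (mul u (P a b x y z)) w"
        using fman[OF x u y z] by (simp add: lin_simps)
      moreover have "Bf (mul x (P g b u y z)) w = eps a (g + b + c) * M"
        unfolding M_def using mcomm[OF x Puyz] Bm[OF Puyz x w] by (simp add: lin_simps)
      moreover have "Bf (mul u (P a b x y z)) w = L"
        using Bm[OF u Pxyz w] Bsym hL by metis
      ultimately show ?thesis by simp
    qed
    have KM: "M = eps a (d + (g + b + c)) * M"
      unfolding M_def using Km[OF x w Puyz] Bsym by metis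
    have KL: "L = eps a (b + c + (d + g)) * L"
      unfolding L_def using KT[OF x y z wu] .
    have "Bf (mul (P a b x y z) w - (- scale (eps a (b + c)) (T b c y z (mul x w)) + mul x (T b c y z w))) u
       = L + eps a (b + c) * M - eps a (b + c + d) * (eps a (g + b + c) * M + eps a g * L)"
      using hL hA hB1 hB2 by (simp add: lin_simps)
    also have "\<dots> = 0" using KM KL by (simp add: eR) algebra
    finally show "Bf (mul (P a b x y z) w - (- scale (eps a (b + c)) (T b c y z (mul x w)) + mul x (T b c y z w))) u = 0" .
  qed
qed

lemma ID1:
  assumes x: "x \<in> Ag a" and y: "y \<in> Ag b" and z: "z \<in> Ag c" and w: "w \<in> Ag d"
  shows "P (a + b) c (mul x y) z w
    = scale (eps a (b + c)) (P b c y z (mul x w)) + scale (eps b c) (P a c x z (mul y w))"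
proof -
  have Pyzw: "P b c y z w \<in> Ag (b + c + d)" using P_gr[OF y z w] by simp
  have Pxzw: "P a c x z w \<in> Ag (a + c + d)" using P_gr[OF x z w] by simp
  have xw: "mul x w \<in> Ag (a + d)" using x w mul_gr by blast
  have yw: "mul y w \<in> Ag (b + d)" using y w mul_gr by blast
  have xy: "mul x y \<in> Ag (a + b)" using x y mul_gr by blast
  show ?thesis
  proof (subst eq_iff_diff_eq_0, rule nondeg_hom)
    fix g u assume u: "u \<in> Ag g"
    have xu: "mul x u \<in> Ag (a + g)" using x u mul_gr by blast
    have t1: "T c d z w u \<in> Ag (c + d + g)" using T_gr[OF z w u] by simp
    have t2: "T c g z u w \<in> Ag (c + g + d)" using T_gr[OF z u w] by simp
    have Pxzu: "P a c x z u \<in> Ag (a + c + g)" using P_gr[OF x z u] by simp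
    define \<delta> where "\<delta> = Bf y (T c d z w (mul x u))"
    define \<eta> where "\<eta> = Bf y (mul x (T c d z w u))"
    define \<alpha> where "\<alpha> = Bf y (T c g z u (mul x w))"
    define \<gamma> where "\<gamma> = Bf y (mul x (T c g z u w))"
    define X where "X = Bf (P (a + b) c (mul x y) z u) w"
    define X' where "X' = Bf (mul y x) (T c g z u w)"
    have d1: "Bf (mul x (P b c y z w)) u = eps a (b + c + d) * \<delta>"
      unfolding \<delta>_def using mcomm[OF x Pyzw] Bm[OF Pyzw x u] F2[OF y z w xu]
      by (simp add: lin_simps)
    have d2: "Bf (mul y (P a c x z w)) u = - (eps a (c + d) * \<delta>) + \<eta>"
      unfolding \<delta>_def \<eta>_def using Bm[OF y Pxzw u] ID2[OF x z w u]
      by (simp add: lin_simps)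
    have r1: "Bf (P b c y z (mul x w)) u = eps (a + d) g * \<alpha>"
      unfolding \<alpha>_def using SYM[OF y z xw u] F2[OF y z u xw] by simp
    have r2: "Bf (P a c x z (mul y w)) u = eps (b + d) g * (eps b d * (- (eps a (c + g) * \<alpha>) + \<gamma>))"
    proof -
      have "Bf (P a c x z (mul y w)) u = eps (b + d) g * Bf (P a c x z u) (mul y w)"
        using SYM[OF x z yw u] .
      also have "Bf (P a c x z u) (mul y w) = eps b d * Bf (P a c x z u) (mul w y)"
        using mcomm[OF y w] by (simp add: lin_simps)
      also have "Bf (P a c x z u) (mul w y) = Bf (mul (P a c x z u) w) y"
        using Bm[OF Pxzu w y] by simp
      also have "\<dots> = - (eps a (c + g) * \<alpha>) + \<gamma>"
        unfolding \<alpha>_def \<gamma>_def using ID2[OF x z u w] Bsym by (simp add: lin_simps)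
      finally show ?thesis .
    qed
    have he: "\<eta> = eps b a * (eps d g * X)"
    proof -
      have "\<eta> = Bf (mul y x) (T c d z w u)" unfolding \<eta>_def using Bm[OF y x t1] by simp
      also have "\<dots> = eps b a * Bf (mul x y) (T c d z w u)" using mcomm[OF y x] by (simp add: lin_simps)
      also have "Bf (mul x y) (T c d z w u) = Bf (P (a + b) c (mul x y) z w) u"
        using F2[OF xy z w u] by simp
      also have "\<dots> = eps d g * X" unfolding X_def using SYM[OF xy z w u] .
      finally show ?thesis .
    qed
    have hg: "\<gamma> = eps b a * X"
    proof -
      have "\<gamma> = Bf (mul y x) (T c g z u w)" unfolding \<gamma>_def using Bm[OF y x t2] by simp
      also have "\<dots> = eps b a * Bf (mul x y) (T c g z u w)" using mcomm[OF y x] by (simp add: lin_simps)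
      also have "Bf (mul x y) (T c g z u w) = X"
        unfolding X_def using F2[OF xy z u w] by simp
      finally show ?thesis .
    qed
    have hX: "X = eps a b * X'"
      unfolding X_def X'_def using F2[OF xy z u w] mcomm[OF x y] by (simp add: lin_simps)
    have KX: "X' = eps b (a + (c + g + d)) * X'"
      unfolding X'_def using Km[OF y x t2] .
    have Ka: "\<alpha> = eps b (c + g + (a + d)) * \<alpha>"
      unfolding \<alpha>_def using KT[OF y z u xw] .
    have "Bf (P (a + b) c (mul x y) z w
       - (scale (eps a (b + c)) (P b c y z (mul x w)) + scale (eps b c) (P a c x z (mul y w)))) u
      = eps a (b + c + d) * \<delta> + eps a b * (- (eps a (c + d) * \<delta>) + \<eta>)
        - eps a (b + c) * (eps (a + d) g * \<alpha>)
        - eps b c * (eps (b + d) g * (eps b d * (- (eps a (c + g) * \<alpha>) + \<gamma>)))"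
      using fman[OF x y z w] d1 d2 r1 r2 by (simp add: lin_simps)
    also have "\<dots> = 0"
      using he hg hX KX Ka einv[of a b] einv[of b c] einv[of b d] einv[of b g] einv[of a d]
        einv[of d g] einv[of a g]
      by (simp add: eR eL) algebra
    finally show "Bf (P (a + b) c (mul x y) z w
       - (scale (eps a (b + c)) (P b c y z (mul x w)) + scale (eps b c) (P a c x z (mul y w)))) u = 0" .
  qed
qed
end

theorem proposition3p8:
  fixes scale :: "'k::field_char_0 \<Rightarrow> 'v::ab_group_add \<Rightarrow> 'v"
    and Ag :: "'g::ab_group_add \<Rightarrow> 'v set"
    and eps :: "'g \<Rightarrow> 'g \<Rightarrow> 'k"
    and mul br :: "'v \<Rightarrow> 'v \<Rightarrow> 'v"
    and Bf :: "'v \<Rightarrow> 'v \<Rightarrow> 'k"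
  assumes "alg_closed_field TYPE('k)"
    and "skew_bicharacter eps"
    and "fd_graded_space scale Ag"
    and "F_manifold_color scale Ag eps mul br"
    and "\<forall>x. Vector_Spaces.linear scale (*) (Bf x)"
    and "\<forall>y. Vector_Spaces.linear scale (*) (\<lambda>x. Bf x y)"
    and "\<forall>x y. Bf x y = Bf y x"
    and "\<forall>x. (\<forall>y. Bf x y = 0) \<longrightarrow> x = 0"
    and "\<forall>a b c x y z. x \<in> Ag a \<longrightarrow> y \<in> Ag b \<longrightarrow> z \<in> Ag c \<longrightarrow>
           Bf (mul x y) z = Bf x (mul y z)"
    and "\<forall>a b c x y z. x \<in> Ag a \<longrightarrow> y \<in> Ag b \<longrightarrow> z \<in> Ag c \<longrightarrow>
           Bf (br x y) z = Bf x (br y z)"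
  shows "coherence_F_manifold_color scale Ag eps mul br"
proof -
  note sb = assms(2)[unfolded skew_bicharacter_def]
  note gs = assms(3)[unfolded fd_graded_space_def]
  note fm = assms(4)[unfolded F_manifold_color_def eps_comm_assoc_def lie_color_def bilinear_op_def graded_op_def]
  have vs: "vector_space scale" using gs by blast
  have dec: "\<And>x. \<exists>f. (\<forall>a. f a \<in> Ag a) \<and> finite {a. f a \<noteq> 0} \<and> x = (\<Sum>a\<in>{a. f a \<noteq> 0}. f a)"
    using gs by (meson ex1_implies_ex)
  have ec: "eps_comm_assoc scale Ag eps mul" and lc: "lie_color scale Ag eps br"
    and fmid: "\<forall>a b c d x y z w. x \<in> Ag a \<longrightarrow> y \<in> Ag b \<longrightarrow> z \<in> Ag c \<longrightarrow> w \<in> Ag d \<longrightarrow>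
        Pfun scale eps mul br (a + b) c (mul x y) z w
        = mul x (Pfun scale eps mul br b c y z w)
          + scale (eps a b) (mul y (Pfun scale eps mul br a c x z w))"
    using assms(4) unfolding F_manifold_color_def by (blast+)
  have mb: "bilinear_op scale mul" and mg: "graded_op Ag mul"
    and ma: "\<forall>x y z. mul (mul x y) z = mul x (mul y z)"
    and mc: "\<forall>a b x y. x \<in> Ag a \<longrightarrow> y \<in> Ag b \<longrightarrow> mul x y = scale (eps a b) (mul y x)"
    using ec unfolding eps_comm_assoc_def by (blast+)
  have bb: "bilinear_op scale br" and bg: "graded_op Ag br"
    and bs: "\<forall>a b x y. x \<in> Ag a \<longrightarrow> y \<in> Ag b \<longrightarrow> br x y = - scale (eps a b) (br y x)"
    using lc unfolding lie_color_def by (blast+)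
  interpret fmc scale Ag eps mul br Bf
    apply (intro fmc.intro vs fmc_axioms.intro)
    subgoal using gs by blast
    subgoal by (rule dec)
    subgoal using sb by blast
    subgoal using sb by blast
    subgoal using sb by blast
    subgoal using mb unfolding bilinear_op_def by blast
    subgoal using mb unfolding bilinear_op_def by blast
    subgoal using bb unfolding bilinear_op_def by blast
    subgoal using bb unfolding bilinear_op_def by blast
    subgoal using assms(5) by blast
    subgoal using assms(6) by blast
    subgoal using mg unfolding graded_op_def by blast
    subgoal using bg unfolding graded_op_def by blast
    subgoal using ma by blast
    subgoal using mc by blast
    subgoal using bs by blast
    subgoal using fmid by blast
    subgoal using assms(7) by blast
    subgoal using assms(8) by blast
    subgoal using assms(9) by blast
    subgoal using assms(10) by blast
    done
  show ?thesis
    unfolding coherence_F_manifold_color_def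
    using assms(4) ID1 ID2 by blast
qed

end
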